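(* Under Friends Appreciation, let $\mathcal{N}_1=\{i\in\mathcal{N}: |F_i|=1\}$ and let $G_1^f=(\mathcal{N},F_1)$ with $F_1=\{(i,j): i\in\mathcal{N}_1,\ j\in F_i\}$. Let $\pi$ be the partition of $\mathcal{N}$ into the vertex sets of the weakly connected components of $G_1^f$ (this is the unique minimal-by-refinement partition guaranteeing $\textsc{oneF}$ for all agents in $\mathcal{N}_1$). Then for every $i\in\mathcal{N}_1$ we have $u_i(\pi)\ge\mathrm{opt}$, and $\pi(i)\subseteq\pi^*(i)$ for every partition $\pi^*$ maximizing the egalitarian welfare.
   Context: A friends-and-enemies instance consists of a set of agents $\mathcal{N}=\{1,\dots,n\}$ and, for each agent $i$, a nonempty set of friends $F_i\subseteq \mathcal{N}\setminus\{i\}$; the enemies of $i$ are $E_i=\mathcal{N}\setminus(F_i\cup\{i\})$. An outcome is a partition $\pi$ of $\mathcal{N}$; $\pi(i)$ is the coalition containing $i$. Under Friends Appreciation, $u_i(C)=|C\cap F_i|-\frac{1}{n}|C\cap E_i|$ for $C\ni i$, $u_i(\pi)=u_i(\pi(i))$, $\mathsf{ESW}(\pi)=\min_i u_i(\pi)$, and $\mathrm{opt}$ is the maximum $\mathsf{ESW}$. A coalition $C$ satisfies $\textsc{oneF}$ for agent $i\in C$ if $C\cap F_i\neq\emptyset$. A partition $\pi$ guarantees $\textsc{oneF}$ for $A\subseteq\mathcal{N}$ if every coalition satisfies $\textsc{oneF}$ for each of its members in $A$; it is minimal-by-refinement with this property if no coalition of $\pi$ can be split into several nonempty coalitions while the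 resulting partition still guarantees $\textsc{oneF}$ for $A$. *)

theory Defs
  imports Complex_Main "HOL-Library.Disjoint_Sets"
begin

text \<open>Agents are the elements of a finite set N; F i is the set of friends of agent i.\<close>

definition enemies :: "'a set \<Rightarrow> ('a \<Rightarrow> 'a set) \<Rightarrow> 'a \<Rightarrow> 'a set" where
  "enemies N F i = N - (F i \<union> {i})"

definition util :: "'a set \<Rightarrow> ('a \<Rightarrow> 'a set) \<Rightarrow> 'a \<Rightarrow> 'a set \<Rightarrow> real" where
  "util N F i C = real (card (C \<inter> F i)) - real (card (C \<inter> enemies N F i)) / real (card N)"

definition coal :: "'a set set \<Rightarrow> 'a \<Rightarrow> 'a set" where
  "coal P i = (THE C. C \<in> P \<and> i \<in> C)"

definition util_part :: "'a set \<Rightarrow> ('a \<Rightarrow> 'a set) \<Rightarrow> 'a \<Rightarrow> 'a set set \<Rightarrow> real" where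
  "util_part N F i P = util N F i (coal P i)"

definition ESW :: "'a set \<Rightarrow> ('a \<Rightarrow> 'a set) \<Rightarrow> 'a set set \<Rightarrow> real" where
  "ESW N F P = Min ((\<lambda>i. util_part N F i P) ` N)"

definition opt :: "'a set \<Rightarrow> ('a \<Rightarrow> 'a set) \<Rightarrow> real" where
  "opt N F = Max {ESW N F P | P. partition_on N P}"

definition ESW_optimal :: "'a set \<Rightarrow> ('a \<Rightarrow> 'a set) \<Rightarrow> 'a set set \<Rightarrow> bool" where
  "ESW_optimal N F P \<longleftrightarrow> partition_on N P \<and> (\<forall>Q. partition_on N Q \<longrightarrow> ESW N F Q \<le> ESW N F P)"

definition N1 :: "'a set \<Rightarrow> ('a \<Rightarrow> 'a set) \<Rightarrow> 'a set" where
  "N1 N F = {i \<in> N. card (F i) = 1}"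

definition F1_arcs :: "'a set \<Rightarrow> ('a \<Rightarrow> 'a set) \<Rightarrow> ('a \<times> 'a) set" where
  "F1_arcs N F = {(i, j). i \<in> N1 N F \<and> j \<in> F i}"

definition wcc_partition :: "'a set \<Rightarrow> ('a \<Rightarrow> 'a set) \<Rightarrow> 'a set set" where
  "wcc_partition N F = N // ((F1_arcs N F \<union> (F1_arcs N F)\<inverse>)\<^sup>* \<inter> (N \<times> N))"

end

theory Submission
  imports Defs
begin

lemma coal_eq:
  assumes "partition_on N P" "C \<in> P" "i \<in> C"
  shows "coal P i = C"
  unfolding coal_def
proof (rule the_equality)
  show "C \<in> P \<and> i \<in> C" using assms by simp
next
  fix D assume "D \<in> P \<and> i \<in> D"
  then show "D = C" using assms partition_onD2[OF assms(1)]
    by (auto simp: disjoint_def)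
qed

lemma coal_in:
  assumes "partition_on N P" "i \<in> N"
  shows "coal P i \<in> P \<and> i \<in> coal P i"
proof -
  obtain C where "C \<in> P" "i \<in> C" using assms partition_onD1[OF assms(1)] by blast
  then show ?thesis using coal_eq[OF assms(1)] by simp
qed

lemma equiv_R:
  assumes "\<forall>i\<in>N. F i \<subseteq> N"
  shows "equiv N ((F1_arcs N F \<union> (F1_arcs N F)\<inverse>)\<^sup>* \<inter> (N \<times> N))"
    (is "equiv N (?S\<^sup>* \<inter> _)")
proof (rule equivI)
  show "?S\<^sup>* \<inter> N \<times> N \<subseteq> N \<times> N" by blast
  show "refl_on N (?S\<^sup>* \<inter> N \<times> N)" by (auto simp: refl_on_def)
  show "sym (?S\<^sup>* \<inter> N \<times> N)"
    unfolding sym_def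
  proof (intro allI impI)
    fix x y assume "(x, y) \<in> ?S\<^sup>* \<inter> N \<times> N"
    moreover have "sym (?S\<^sup>*)" by (rule sym_rtrancl) (simp add: sym_Un_converse)
    ultimately show "(y, x) \<in> ?S\<^sup>* \<inter> N \<times> N" by (auto dest: symD)
  qed
  show "trans (?S\<^sup>* \<inter> N \<times> N)"
  proof (rule transI)
    fix x y z assume "(x, y) \<in> ?S\<^sup>* \<inter> N \<times> N" "(y, z) \<in> ?S\<^sup>* \<inter> N \<times> N"
    then show "(x, z) \<in> ?S\<^sup>* \<inter> N \<times> N" using rtrancl_trans[of x y ?S z] by blast
  qed
qed

lemma coal_wcc:
  assumes "\<forall>i\<in>N. F i \<subseteq> N" "i \<in> N"
  shows "coal (wcc_partition N F) i = ((F1_arcs N F \<union> (F1_arcs N F)\<inverse>)\<^sup>* \<inter> (N \<times> N)) `` {i}"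
proof -
  let ?R = "(F1_arcs N F \<union> (F1_arcs N F)\<inverse>)\<^sup>* \<inter> (N \<times> N)"
  have e: "equiv N ?R" by (rule equiv_R[OF assms(1)])
  show ?thesis unfolding wcc_partition_def
    apply (rule coal_eq[OF partition_on_quotient[OF e]])
    using assms(2) apply (simp add: quotientI)
    using assms(2) by simp
qed

lemma util_pos_grand:
  assumes "finite N" "\<forall>i\<in>N. F i \<noteq> {} \<and> F i \<subseteq> N - {i}" "j \<in> N"
  shows "util N F j N > 0"
proof -
  have sub: "F j \<subseteq> N" using assms(2,3) by blast
  have ne: "F j \<noteq> {}" using assms(2,3) by blast
  have fin: "finite (F j)" using sub assms(1) by (rule finite_subset)
  have eq: "N \<inter> F j = F j" using sub by blast
  have "card (F j) > 0" using fin ne by (simp add: card_gt_0_iff)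
  hence c1: "real (card (N \<inter> F j)) \<ge> 1" unfolding eq by simp
  have s2: "N \<inter> enemies N F j \<subseteq> N - {j}" by (auto simp: enemies_def)
  have fin2: "finite (N - {j})" using assms(1) by simp
  have "card (N \<inter> enemies N F j) \<le> card (N - {j})" by (rule card_mono[OF fin2 s2])
  also have "\<dots> = card N - 1" using assms(1,3) by (simp add: card_Diff_singleton)
  finally have c2a: "card (N \<inter> enemies N F j) \<le> card N - 1" .
  have np: "card N > 0" using assms(1,3) card_gt_0_iff by blast
  have c2: "card (N \<inter> enemies N F j) < card N" using c2a np by linarith
  have n: "real (card N) > 0" using np by simp
  have "real (card (N \<inter> enemies N F j)) < real (card N)" using c2 by simp
  hence "real (card (N \<inter> enemies N F j)) / real (card N) < 1" using n by simp
  then have "real (card (N \<inter> F j)) - real (card (N \<inter> enemies N F j)) / real (card N) > 0"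
    using c1 by linarith
  then show ?thesis by (simp only: util_def)
qed

lemma ESW_grand_pos:
  assumes "finite N" "\<forall>i\<in>N. F i \<noteq> {} \<and> F i \<subseteq> N - {i}" "N \<noteq> {}"
  shows "ESW N F {N} > 0"
proof -
  have p: "partition_on N {N}" by (rule partition_on_space[OF assms(3)])
  have "\<forall>j\<in>N. util_part N F j {N} > 0"
  proof
    fix j assume "j \<in> N"
    have "coal {N} j = N" using coal_eq[OF p, of N j] \<open>j \<in> N\<close> by simp
    then show "util_part N F j {N} > 0" using util_pos_grand[OF assms(1,2) \<open>j \<in> N\<close>]
      by (simp add: util_part_def)
  qed
  moreover have "finite ((\<lambda>i. util_part N F i {N}) ` N)" using assms(1) by simp
  moreover have "(\<lambda>i. util_part N F i {N}) ` N \<noteq> {}" using assms(3) by simp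
  ultimately show ?thesis unfolding ESW_def by (subst Min_gr_iff) auto
qed

lemma ESW_le:
  assumes "finite N" "j \<in> N"
  shows "ESW N F P \<le> util_part N F j P"
  unfolding ESW_def using assms by (intro Min_le) auto

lemma key:
  assumes fin: "finite N" and F: "\<forall>i\<in>N. F i \<noteq> {} \<and> F i \<subseteq> N - {i}"
    and P: "partition_on N P" and pos: "ESW N F P > 0" and i: "i \<in> N"
  shows "coal (wcc_partition N F) i \<subseteq> coal P i"
proof -
  let ?A = "F1_arcs N F"
  have friend: "coal P j \<inter> F j \<noteq> {}" if "j \<in> N" for j
  proof
    assume "coal P j \<inter> F j = {}"
    hence "util_part N F j P \<le> 0" by (simp add: util_part_def util_def)
    thus False using ESW_le[OF fin that, of F P] pos by linarith
  qed
  have arc: "a \<in> N \<and> b \<in> N \<and> coal P b = coal P a" if "(a, b) \<in> ?A" for a b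
  proof -
    from that have a: "a \<in> N1 N F" "b \<in> F a" by (auto simp: F1_arcs_def)
    hence aN: "a \<in> N" and c: "card (F a) = 1" by (auto simp: N1_def)
    from c obtain f where "F a = {f}" by (auto simp: card_Suc_eq)
    with a friend[OF aN] have "b \<in> coal P a" by auto
    moreover have "b \<in> N" using a aN F by auto
    ultimately show ?thesis using coal_eq[OF P] coal_in[OF P aN] aN by metis
  qed
  have step: "y \<in> N \<and> coal P y = coal P x"
    if "(x, y) \<in> (?A \<union> ?A\<inverse>)\<^sup>*" "x \<in> N" for x y
    using that
  proof (induction rule: rtrancl_induct)
    case base then show ?case by simp
  next
    case (step y z)
    then show ?case using arc by auto
  qed
  show ?thesis
  proof
    fix k assume "k \<in> coal (wcc_partition N F) i"
    hence "(i, k) \<in> (?A \<union> ?A\<inverse>)\<^sup>*" "k \<in> N" using coal_wcc[of N F i] F i by auto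
    thus "k \<in> coal P i" using step[of i k] i coal_in[OF P] by metis
  qed
qed

theorem lemma2:
  fixes N :: "'a set" and F :: "'a \<Rightarrow> 'a set"
  assumes "finite N"
    and "\<forall>i\<in>N. F i \<noteq> {} \<and> F i \<subseteq> N - {i}"
  shows "\<forall>i\<in>N1 N F.
           util_part N F i (wcc_partition N F) \<ge> opt N F \<and>
           (\<forall>P. ESW_optimal N F P \<longrightarrow> coal (wcc_partition N F) i \<subseteq> coal P i)"
proof
  fix i assume i1: "i \<in> N1 N F"
  hence iN: "i \<in> N" and c: "card (F i) = 1" by (auto simp: N1_def)
  have Nne: "N \<noteq> {}" using iN by auto
  have gp: "partition_on N {N}" by (rule partition_on_space[OF Nne])
  have g: "ESW N F {N} > 0" by (rule ESW_grand_pos[OF assms Nne])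
  let ?S = "{ESW N F P | P. partition_on N P}"
  have finS: "finite ?S" using finitely_many_partition_on[OF assms(1)]
    by (simp add: Setcompr_eq_image)
  have "opt N F \<in> ?S" unfolding opt_def using finS gp by (intro Max_in) auto
  then obtain Q where Q: "partition_on N Q" "opt N F = ESW N F Q" by auto
  have "ESW N F {N} \<le> opt N F" unfolding opt_def using finS gp by (intro Max_ge) auto
  hence Qpos: "ESW N F Q > 0" using g Q by simp
  have sub: "coal (wcc_partition N F) i \<subseteq> coal Q i" by (rule key[OF assms Q(1) Qpos iN])
  from c obtain f where Fi: "F i = {f}" by (auto simp: card_Suc_eq)
  have fN: "f \<in> N" using assms(2) iN Fi by auto
  have "(i, f) \<in> F1_arcs N F" using i1 Fi by (auto simp: F1_arcs_def)
  hence "f \<in> coal (wcc_partition N F) i" using coal_wcc[of N F i] assms(2) iN fN by auto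
  hence fQ: "f \<in> coal Q i" using sub by auto
  have finQ: "finite (coal Q i)"
    using coal_in[OF Q(1) iN] Q(1) partition_onD1 assms(1) by (metis Union_upper finite_subset)
  have "card (coal Q i \<inter> enemies N F i) \<ge> card (coal (wcc_partition N F) i \<inter> enemies N F i)"
    using sub finQ by (intro card_mono) auto
  hence "util_part N F i (wcc_partition N F) \<ge> util_part N F i Q"
    unfolding util_part_def util_def using Fi fQ
      \<open>f \<in> coal (wcc_partition N F) i\<close>
    by (simp add: divide_right_mono)
  moreover have "util_part N F i Q \<ge> opt N F" using Q ESW_le[OF assms(1) iN] by simp
  ultimately have u: "util_part N F i (wcc_partition N F) \<ge> opt N F" by linarith
  have "\<forall>P. ESW_optimal N F P \<longrightarrow> coal (wcc_partition N F) i \<subseteq> coal P i"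
  proof (intro allI impI)
    fix P assume "ESW_optimal N F P"
    hence P: "partition_on N P" "ESW N F {N} \<le> ESW N F P" using gp by (auto simp: ESW_optimal_def)
    show "coal (wcc_partition N F) i \<subseteq> coal P i" using key[OF assms P(1) _ iN] P g by linarith
  qed
  with u show "util_part N F i (wcc_partition N F) \<ge> opt N F \<and>
           (\<forall>P. ESW_optimal N F P \<longrightarrow> coal (wcc_partition N F) i \<subseteq> coal P i)" by simp
qed

end
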